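(* $C_{AD}(3,6)=\log_2 27$.
   Context: There are $n$ nodes labeled $1,\dots,n$ (here $n=3$); node $i$ privately holds an input $x_i\in\{1,\dots,M\}$ (here $M=6$). Communication is over private point-to-point links of a fully connected synchronous network. A deterministic protocol $P$ is a fixed finite schedule of steps $l=1,\dots,L(P)$; in step $l$ a prescribed node $T_l$ sends to a prescribed node $R_l\neq T_l$ one symbol $f_l(x_{T_l},T_l^+(l))$, where $T_l^+(l)$ is the sequence of symbols $T_l$ has received in steps $1,\dots,l-1$; only $R_l$ receives it. Its complexity is $C(P)=\sum_{l}\log_2 S_l(P)$, with $S_l(P)$ the number of distinct values of the step-$l$ symbol over all inputs in $\{1,\dots,M\}^n$. At the end each node $i$ outputs a bit $EQ_i$ depending on $x_i$ and the symbols it received. $P$ solves MEQ-AD$(n,M)$ if for every input, $EQ_1=\cdots=EQ_n=0$ iff $x_1=\cdots=x_n$. $C_{AD}(n,M)$ is the infimum of $C(P)$ over protocols solving MEQ-AD$(n,M)$. *)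

theory Defs
  imports Complex_Main "HOL-Library.FuncSet"
begin

text \<open>Symbols are natural numbers
  (any finite symbol alphabet can be encoded injectively into nat).
  A step is (T, R, f): node T sends f (x_T) (symbols T received so far) to R.\<close>

type_synonym step = "nat \<times> nat \<times> (nat \<Rightarrow> nat list \<Rightarrow> nat)"

record protocol =
  steps :: "step list"
  eq_out :: "nat \<Rightarrow> nat \<Rightarrow> nat list \<Rightarrow> bool"  \<comment> \<open>EQ_i = output i x_i received_i; True means 1\<close>

definition inputs :: "nat \<Rightarrow> nat \<Rightarrow> (nat \<Rightarrow> nat) set" where
  "inputs n M = {1..n} \<rightarrow>\<^sub>E {1..M}"

definition received :: "nat \<Rightarrow> (nat \<times> nat) list \<Rightarrow> nat list" where
  "received i h = map snd (filter (\<lambda>p. fst p = i) h)"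

fun run :: "step list \<Rightarrow> (nat \<Rightarrow> nat) \<Rightarrow> (nat \<times> nat) list \<Rightarrow> (nat \<times> nat) list" where
  "run [] x h = h"
| "run ((T, R, f) # rest) x h = run rest x (h @ [(R, f (x T) (received T h))])"

definition history :: "protocol \<Rightarrow> (nat \<Rightarrow> nat) \<Rightarrow> (nat \<times> nat) list" where
  "history P x = run (steps P) x []"

definition sym_at :: "protocol \<Rightarrow> (nat \<Rightarrow> nat) \<Rightarrow> nat \<Rightarrow> nat" where
  "sym_at P x l = snd (history P x ! l)"

definition well_formed :: "nat \<Rightarrow> protocol \<Rightarrow> bool" where
  "well_formed n P \<longleftrightarrow> (\<forall>(T, R, f) \<in> set (steps P). T \<in> {1..n} \<and> R \<in> {1..n} \<and> T \<noteq> R)"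

definition complexity :: "nat \<Rightarrow> nat \<Rightarrow> protocol \<Rightarrow> real" where
  "complexity n M P =
     (\<Sum>l<length (steps P). log 2 (real (card ((\<lambda>x. sym_at P x l) ` inputs n M))))"

definition solves_MEQ_AD :: "nat \<Rightarrow> nat \<Rightarrow> protocol \<Rightarrow> bool" where
  "solves_MEQ_AD n M P \<longleftrightarrow> well_formed n P \<and>
     (\<forall>x \<in> inputs n M.
        (\<forall>i \<in> {1..n}. \<not> eq_out P i (x i) (received i (history P x)))
        \<longleftrightarrow> (\<forall>i \<in> {1..n}. \<forall>j \<in> {1..n}. x i = x j))"

definition C_AD :: "nat \<Rightarrow> nat \<Rightarrow> real" where
  "C_AD n M = Inf (complexity n M ` {P. solves_MEQ_AD n M P})"

end

theory Submission
  imports Defs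
begin

lemma mono3: "(c::nat) \<le> p \<Longrightarrow> a \<le> q \<Longrightarrow> b \<le> r \<Longrightarrow> c*a*b \<le> p*q*r"
  by (intro mult_le_mono) auto

lemma arith27:
  fixes p q r :: nat
  assumes a1: "6 \<le> p*q" and a2: "6 \<le> p*r" and a3: "6 \<le> q*r"
    and t1: "p*q = 6 \<Longrightarrow> 6 \<le> r" and t2: "p*r = 6 \<Longrightarrow> 6 \<le> q" and t3: "q*r = 6 \<Longrightarrow> 6 \<le> p"
  shows "27 \<le> p*q*r"
proof -
  have sym: "\<And>p q r::nat. 7 \<le> p*q \<Longrightarrow> 7 \<le> p*r \<Longrightarrow> 7 \<le> q*r \<Longrightarrow> p \<le> 2 \<Longrightarrow> 27 \<le> p*q*r"
  proof -
    fix p q r :: nat assume b1: "7 \<le> p*q" and b2: "7 \<le> p*r" and b3: "7 \<le> q*r" and p2: "p \<le> 2"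
    have "p = 0 \<or> p = 1 \<or> p = 2" using p2 by auto
    moreover have "p \<noteq> 0"
    proof
      assume "p = 0" then show False using b1 by simp
    qed
    moreover
    { assume "p = 1"
      then have "7 \<le> q" "7 \<le> r" using b1 b2 by auto
      then have "1*7*7 \<le> p*q*r" using \<open>p = 1\<close> by (intro mono3) auto
      then have "27 \<le> p*q*r" by simp }
    moreover
    { assume "p = 2"
      then have "4 \<le> q" "4 \<le> r" using b1 b2 by auto
      then have "2*4*4 \<le> p*q*r" using \<open>p = 2\<close> by (intro mono3) auto
      then have "27 \<le> p*q*r" by simp }
    ultimately show "27 \<le> p*q*r" by blast
  qed
  show ?thesis
  proof (cases "p*q = 6 \<or> p*r = 6 \<or> q*r = 6")
    case True
    then show ?thesis
    proof (elim disjE)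
      assume h: "p*q = 6" then have "6*6 \<le> (p*q)*r" using t1 by (intro mult_le_mono) auto
      then show ?thesis by simp
    next
      assume h: "p*r = 6" then have "6*6 \<le> (p*r)*q" using t2 by (intro mult_le_mono) auto
      then show ?thesis by (simp add: ac_simps)
    next
      assume h: "q*r = 6" then have "6*6 \<le> (q*r)*p" using t3 by (intro mult_le_mono) auto
      then show ?thesis by (simp add: ac_simps)
    qed
  next
    case False
    then have b1: "7 \<le> p*q" and b2: "7 \<le> p*r" and b3: "7 \<le> q*r" using a1 a2 a3 by auto
    show ?thesis
    proof (cases "p \<le> 2")
      case True then show ?thesis using sym[OF b1 b2 b3] by blast
    next
      case np: False
      show ?thesis
      proof (cases "q \<le> 2")
        case True
        have "27 \<le> q*p*r" using sym[of q p r] b1 b2 b3 True by (simp add: ac_simps)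
        then show ?thesis by (simp add: ac_simps)
      next
        case nq: False
        show ?thesis
        proof (cases "r \<le> 2")
          case True
          have "27 \<le> r*p*q" using sym[of r p q] b1 b2 b3 True by (simp add: ac_simps)
          then show ?thesis by (simp add: ac_simps)
        next
          case False
          then have "3*3*3 \<le> p*q*r" using np nq by (intro mono3) auto
          then show ?thesis by simp
        qed
      qed
    qed
  qed
qed


lemma run_props:
  "length (run ss x h) = length h + length ss \<and> take (length h) (run ss x h) = h \<and>
   (\<forall>l < length ss. run ss x h ! (length h + l) =
      (fst (snd (ss!l)), snd (snd (ss!l)) (x (fst (ss!l))) (received (fst (ss!l)) (take (length h + l) (run ss x h)))))"
proof (induction ss arbitrary: h)
  case Nil
  then show ?case by simp
next
  case (Cons st rest)
  obtain T R f where st: "st = (T, R, f)" by (cases st) auto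
  define h' where "h' = h @ [(R, f (x T) (received T h))]"
  have IH: "length (run rest x h') = length h' + length rest \<and> take (length h') (run rest x h') = h' \<and>
   (\<forall>l < length rest. run rest x h' ! (length h' + l) =
      (fst (snd (rest!l)), snd (snd (rest!l)) (x (fst (rest!l))) (received (fst (rest!l)) (take (length h' + l) (run rest x h')))))"
    using Cons.IH by blast
  have r: "run (st # rest) x h = run rest x h'" by (simp add: st h'_def)
  have lenh': "length h' = Suc (length h)" by (simp add: h'_def)
  have tk: "take (length h) (run rest x h') = h"
  proof -
    have "take (length h) (run rest x h') = take (length h) (take (length h') (run rest x h'))"
      using lenh' by simp
    also have "\<dots> = h" using IH by (simp add: h'_def)
    finally show ?thesis .
  qed
  have nth0: "run rest x h' ! length h = (R, f (x T) (received T h))"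
  proof -
    have "run rest x h' ! length h = take (length h') (run rest x h') ! length h"
      using lenh' by simp
    also have "\<dots> = h' ! length h" using IH by simp
    finally show ?thesis by (simp add: h'_def)
  qed
  have "\<forall>l < length (st#rest). run rest x h' ! (length h + l) =
      (fst (snd ((st#rest)!l)), snd (snd ((st#rest)!l)) (x (fst ((st#rest)!l))) (received (fst ((st#rest)!l)) (take (length h + l) (run rest x h'))))"
  proof (intro allI impI)
    fix l assume l: "l < length (st#rest)"
    show "run rest x h' ! (length h + l) =
      (fst (snd ((st#rest)!l)), snd (snd ((st#rest)!l)) (x (fst ((st#rest)!l))) (received (fst ((st#rest)!l)) (take (length h + l) (run rest x h'))))"
    proof (cases l)
      case 0 then show ?thesis using nth0 tk st by simp
    next
      case (Suc l')
      then have "l' < length rest" using l by simp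
      then show ?thesis using IH Suc lenh' by (simp add: add.commute)
    qed
  qed
  then show ?case using IH r lenh' tk by simp
qed


definition TT :: "protocol \<Rightarrow> nat \<Rightarrow> nat" where "TT P l = fst (steps P ! l)"
definition RR :: "protocol \<Rightarrow> nat \<Rightarrow> nat" where "RR P l = fst (snd (steps P ! l))"
definition FF :: "protocol \<Rightarrow> nat \<Rightarrow> nat \<Rightarrow> nat list \<Rightarrow> nat" where "FF P l = snd (snd (steps P ! l))"
definition HH :: "protocol \<Rightarrow> (nat \<Rightarrow> nat) \<Rightarrow> (nat \<times> nat) list" where
  "HH P \<sigma> = map (\<lambda>l. (RR P l, \<sigma> l)) [0..<length (steps P)]"

lemma hist_len: "length (history P x) = length (steps P)"
  using run_props[of "steps P" x "[]"] by (simp add: history_def)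

lemma hist_nth: "l < length (steps P) \<Longrightarrow> history P x ! l =
   (RR P l, FF P l (x (TT P l)) (received (TT P l) (take l (history P x))))"
  using run_props[of "steps P" x "[]"] by (simp add: history_def TT_def RR_def FF_def)

lemma hist_H: "history P x = HH P (sym_at P x)"
proof (rule nth_equalityI)
  show "length (history P x) = length (HH P (sym_at P x))" by (simp add: hist_len HH_def)
next
  fix l assume "l < length (history P x)"
  then have l: "l < length (steps P)" by (simp add: hist_len)
  show "history P x ! l = HH P (sym_at P x) ! l"
    using hist_nth[OF l, of x] l by (simp add: HH_def sym_at_def)
qed

lemma recv_take_H: "l \<le> length (steps P) \<Longrightarrow>
  received i (take l (HH P \<sigma>)) = map \<sigma> (filter (\<lambda>m. RR P m = i) [0..<l])"
  by (simp add: HH_def received_def take_map filter_map comp_def min_def)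

lemma sym_rec: "l < length (steps P) \<Longrightarrow> sym_at P x l =
   FF P l (x (TT P l)) (map (sym_at P x) (filter (\<lambda>m. RR P m = TT P l) [0..<l]))"
proof -
  assume l: "l < length (steps P)"
  have "sym_at P x l = FF P l (x (TT P l)) (received (TT P l) (take l (history P x)))"
    using hist_nth[OF l, of x] by (simp add: sym_at_def)
  also have "received (TT P l) (take l (history P x)) = map (sym_at P x) (filter (\<lambda>m. RR P m = TT P l) [0..<l])"
    using recv_take_H[of l P "TT P l" "sym_at P x"] l by (simp add: hist_H[symmetric])
  finally show ?thesis .
qed

lemma recv_hist: "received i (history P x) = map (sym_at P x) (filter (\<lambda>m. RR P m = i) [0..<length (steps P)])"
proof -
  have "received i (history P x) = received i (take (length (steps P)) (HH P (sym_at P x)))"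
    by (simp add: hist_H[symmetric] hist_len)
  also have "\<dots> = map (sym_at P x) (filter (\<lambda>m. RR P m = i) [0..<length (steps P)])"
    by (rule recv_take_H) simp
  finally show ?thesis .
qed

lemma uniq:
  assumes rec: "\<forall>l<length (steps P). \<sigma> l = FF P l (x (TT P l)) (map \<sigma> (filter (\<lambda>m. RR P m = TT P l) [0..<l]))"
  shows "l < length (steps P) \<Longrightarrow> \<sigma> l = sym_at P x l"
proof (induction l rule: less_induct)
  case (less l)
  have "map \<sigma> (filter (\<lambda>m. RR P m = TT P l) [0..<l]) = map (sym_at P x) (filter (\<lambda>m. RR P m = TT P l) [0..<l])"
    using less by (intro map_cong) auto
  note mm = this
  have "\<sigma> l = FF P l (x (TT P l)) (map \<sigma> (filter (\<lambda>m. RR P m = TT P l) [0..<l]))"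
    using rec less.prems by blast
  also have "\<dots> = FF P l (x (TT P l)) (map (sym_at P x) (filter (\<lambda>m. RR P m = TT P l) [0..<l]))"
    by (simp only: mm)
  also have "\<dots> = sym_at P x l" by (rule sym_rec[OF less.prems, symmetric])
  finally show ?case .
qed


lemma wf_nth:
  assumes "well_formed 3 P" "l < length (steps P)"
  shows "TT P l \<in> {1..3} \<and> RR P l \<in> {1..3} \<and> TT P l \<noteq> RR P l"
proof -
  have mem: "steps P ! l \<in> set (steps P)" using assms(2) by simp
  obtain T R f where e: "steps P ! l = (T, R, f)" by (cases "steps P ! l") auto
  have "\<forall>s\<in>set (steps P). (case s of (T, R, f) \<Rightarrow> T \<in> {1..3} \<and> R \<in> {1..3} \<and> T \<noteq> R)"
    using assms(1) unfolding well_formed_def by simp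
  then have "case steps P ! l of (T, R, f) \<Rightarrow> T \<in> {1..3} \<and> R \<in> {1..3} \<and> T \<noteq> R"
    using mem by (rule bspec)
  then show ?thesis by (simp add: e TT_def RR_def)
qed

lemma mix:
  assumes wf: "well_formed 3 P"
  and agree: "\<forall>m\<in>{1..3}. \<forall>l<length (steps P). (TT P l = m \<or> RR P l = m) \<longrightarrow> \<sigma> l = sym_at P (Y m) l"
  and xY: "\<forall>m\<in>{1..3}. x m = Y m m"
  shows "l < length (steps P) \<Longrightarrow> \<sigma> l = sym_at P x l"
proof (rule uniq)
  show "\<forall>l<length (steps P). \<sigma> l = FF P l (x (TT P l)) (map \<sigma> (filter (\<lambda>m. RR P m = TT P l) [0..<l]))"
  proof (intro allI impI)
    fix l assume l: "l < length (steps P)"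
    define m where "m = TT P l"
    have m: "m \<in> {1..3}" using wf_nth[OF wf l] m_def by simp
    have "map \<sigma> (filter (\<lambda>k. RR P k = m) [0..<l]) = map (sym_at P (Y m)) (filter (\<lambda>k. RR P k = m) [0..<l])"
      using agree m l by (intro map_cong) auto
    note mapeq = this
    have "\<sigma> l = sym_at P (Y m) l" using agree m l m_def by blast
    also have "\<dots> = FF P l (Y m m) (map (sym_at P (Y m)) (filter (\<lambda>k. RR P k = m) [0..<l]))"
      using sym_rec[OF l, of "Y m"] m_def by simp
    also have "\<dots> = FF P l (x (TT P l)) (map \<sigma> (filter (\<lambda>k. RR P k = TT P l) [0..<l]))"
    proof -
      have xm: "x m = Y m m" using xY m by blast
      show ?thesis by (simp only: m_def[symmetric] mapeq xm)
    qed
    finally show "\<sigma> l = FF P l (x (TT P l)) (map \<sigma> (filter (\<lambda>k. RR P k = TT P l) [0..<l]))" .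
  qed
qed

lemma mix_recv:
  assumes wf: "well_formed 3 P"
  and agree: "\<forall>m\<in>{1..3}. \<forall>l<length (steps P). (TT P l = m \<or> RR P l = m) \<longrightarrow> \<sigma> l = sym_at P (Y m) l"
  and xY: "\<forall>m\<in>{1..3}. x m = Y m m"
  and m: "m \<in> {1..3}"
  shows "received m (history P x) = received m (history P (Y m))"
  unfolding recv_hist
proof (intro map_cong refl)
  fix k assume "k \<in> set (filter (\<lambda>k. RR P k = m) [0..<length (steps P)])"
  then have k: "k < length (steps P)" "RR P k = m" by auto
  show "sym_at P x k = sym_at P (Y m) k"
    using mix[OF wf agree xY k(1)] agree m k by auto
qed

lemma fool:
  assumes sol: "solves_MEQ_AD 3 6 P"
  and Yin: "\<forall>m\<in>{1..3}. Y m \<in> inputs 3 6"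
  and Yc: "\<forall>m\<in>{1..3}. \<forall>a\<in>{1..3}. \<forall>b\<in>{1..3}. Y m a = Y m b"
  and agree: "\<forall>m\<in>{1..3}. \<forall>l<length (steps P). (TT P l = m \<or> RR P l = m) \<longrightarrow> \<sigma> l = sym_at P (Y m) l"
  and xin: "x \<in> inputs 3 6"
  and xY: "\<forall>m\<in>{1..3}. x m = Y m m"
  shows "\<forall>a\<in>{1..3}. \<forall>b\<in>{1..3}. x a = x b"
proof -
  have wf: "well_formed 3 P" using sol by (simp add: solves_MEQ_AD_def)
  have iff: "\<forall>x\<in>inputs 3 6. (\<forall>i\<in>{1..3}. \<not> eq_out P i (x i) (received i (history P x)))
        \<longleftrightarrow> (\<forall>i \<in> {1..3}. \<forall>j \<in> {1..3}. x i = x j)"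
    using sol by (simp add: solves_MEQ_AD_def)
  have "\<forall>m\<in>{1..3}. \<not> eq_out P m (x m) (received m (history P x))"
  proof
    fix m :: nat assume m: "m \<in> {1..3}"
    have Ym: "Y m \<in> inputs 3 6" using Yin m by blast
    have "\<forall>i\<in>{1..3}. \<forall>j\<in>{1..3}. Y m i = Y m j" using Yc m by blast
    then have acc: "\<forall>i\<in>{1..3}. \<not> eq_out P i (Y m i) (received i (history P (Y m)))"
      using iff Ym by blast
    have "\<not> eq_out P m (Y m m) (received m (history P (Y m)))" using acc m by blast
    then show "\<not> eq_out P m (x m) (received m (history P x))"
      using mix_recv[OF wf agree xY m] xY m by simp
  qed
  then show ?thesis using iff xin by blast
qed


definition img :: "protocol \<Rightarrow> nat \<Rightarrow> nat set" where
  "img P l = (\<lambda>x. sym_at P x l) ` inputs 3 6"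
definition tau :: "protocol \<Rightarrow> nat set \<Rightarrow> (nat \<Rightarrow> nat) \<Rightarrow> (nat \<Rightarrow> nat)" where
  "tau P I x = restrict (\<lambda>l. sym_at P x l) I"
definition diag :: "nat \<Rightarrow> nat \<Rightarrow> nat" where
  "diag d = restrict (\<lambda>_. d) {1..3}"
definition inc :: "protocol \<Rightarrow> nat \<Rightarrow> nat set" where
  "inc P i = {l. l < length (steps P) \<and> (TT P l = i \<or> RR P l = i)}"
definition EE :: "protocol \<Rightarrow> nat \<Rightarrow> nat \<Rightarrow> nat set" where
  "EE P i j = {l. l < length (steps P) \<and> ((TT P l = i \<and> RR P l = j) \<or> (TT P l = j \<and> RR P l = i))}"
definition cs :: "protocol \<Rightarrow> nat set \<Rightarrow> nat" where
  "cs P I = prod (\<lambda>l. card (img P l)) I"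

lemma finite_inputs: "finite (inputs 3 6)"
  unfolding inputs_def by (rule finite_PiE) auto

lemma finite_img: "finite (img P l)"
  unfolding img_def using finite_inputs by simp

lemma diag_in: "d \<in> {1..6} \<Longrightarrow> diag d \<in> inputs 3 6"
  unfolding diag_def inputs_def by (simp add: restrict_PiE_iff)

lemma diag_app: "m \<in> {1..3} \<Longrightarrow> diag d m = d"
  unfolding diag_def by simp

lemma img_pos: "0 < card (img P l)"
proof -
  have "diag 1 \<in> inputs 3 6" by (rule diag_in) simp
  then have "img P l \<noteq> {}" unfolding img_def by blast
  then show ?thesis using finite_img by (simp add: card_gt_0_iff)
qed

lemma tau_in: "x \<in> inputs 3 6 \<Longrightarrow> tau P I x \<in> PiE I (img P)"
  unfolding tau_def img_def by (auto simp: restrict_PiE_iff)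

lemma card_tau_le:
  assumes "finite I" "X \<subseteq> inputs 3 6"
  shows "card (tau P I ` X) \<le> cs P I"
proof -
  have "tau P I ` X \<subseteq> PiE I (img P)" using tau_in assms(2) by blast
  moreover have "finite (PiE I (img P))" using assms(1) finite_img by (intro finite_PiE) auto
  ultimately have "card (tau P I ` X) \<le> card (PiE I (img P))" by (rule card_mono[rotated])
  also have "\<dots> = cs P I" unfolding cs_def by (rule card_PiE[OF assms(1)])
  finally show ?thesis .
qed

lemma tau_eqD: "tau P I x = tau P I y \<Longrightarrow> l \<in> I \<Longrightarrow> sym_at P x l = sym_at P y l"
  unfolding tau_def by (metis restrict_apply')

lemma finite_inc: "finite (inc P i)" unfolding inc_def by simp

lemma cut_inj:
  assumes sol: "solves_MEQ_AD 3 6 P" and i: "i \<in> {1..3}"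
  shows "inj_on (\<lambda>d. tau P (inc P i) (diag d)) {1..6}"
proof (rule inj_onI, rule ccontr)
  fix d d' assume d: "d \<in> {1..6}" and d': "d' \<in> {1..6}"
    and eq: "tau P (inc P i) (diag d) = tau P (inc P i) (diag d')" and ne: "d \<noteq> d'"
  define Y where "Y = (\<lambda>m::nat. if m = i then diag d else diag d')"
  define x where "x = restrict (\<lambda>m::nat. if m = i then d else d') {1..3}"
  have Yin: "\<forall>m\<in>{1..3}. Y m \<in> inputs 3 6" using diag_in d d' by (simp add: Y_def)
  have Yc: "\<forall>m\<in>{1..3}. \<forall>a\<in>{1..3}. \<forall>b\<in>{1..3}. Y m a = Y m b" by (simp add: Y_def diag_app)
  have agree: "\<forall>m\<in>{1..3}. \<forall>l<length (steps P). (TT P l = m \<or> RR P l = m) \<longrightarrow>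
       sym_at P (diag d') l = sym_at P (Y m) l"
  proof (intro ballI allI impI)
    fix m l assume "m \<in> {1..3}" "l < length (steps P)" "TT P l = m \<or> RR P l = m"
    then show "sym_at P (diag d') l = sym_at P (Y m) l"
      using tau_eqD[OF eq, of l] by (auto simp: Y_def inc_def)
  qed
  have xin: "x \<in> inputs 3 6" using d d' by (simp add: x_def inputs_def restrict_PiE_iff)
  have xY: "\<forall>m\<in>{1..3}. x m = Y m m" by (simp add: x_def Y_def diag_app)
  have c: "\<forall>a\<in>{1..3}. \<forall>b\<in>{1..3}. x a = x b"
    by (rule fool[OF sol Yin Yc agree xin xY])
  define j where "j = (if i = 1 then 2 else (1::nat))"
  have j: "j \<in> {1..3}" "j \<noteq> i" using i by (auto simp: j_def)
  have "x i = x j" using c i j by blast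
  then show False using i j ne by (simp add: x_def)
qed

lemma cut_bound:
  assumes sol: "solves_MEQ_AD 3 6 P" and i: "i \<in> {1..3}"
  shows "6 \<le> cs P (inc P i)"
proof -
  have "card ((\<lambda>d. tau P (inc P i) (diag d)) ` {1..6}) = 6"
    using card_image[OF cut_inj[OF sol i]] by simp
  moreover have "card ((\<lambda>d. tau P (inc P i) (diag d)) ` {1..6}) = card (tau P (inc P i) ` (diag ` {1..6}))"
    by (simp add: image_image)
  moreover have "card (tau P (inc P i) ` (diag ` {1..6})) \<le> cs P (inc P i)"
    using finite_inc diag_in by (intro card_tau_le) auto
  ultimately show ?thesis by simp
qed


lemma tight_inj:
  assumes sol: "solves_MEQ_AD 3 6 P" and i: "i \<in> {1..3}" and j: "j \<in> {1..3}" and k: "k \<in> {1..3}"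
    and ij: "i \<noteq> j" and ik: "i \<noteq> k" and jk: "j \<noteq> k"
    and six: "cs P (inc P i) = 6"
  shows "inj_on (\<lambda>d. tau P (EE P j k) (diag d)) {1..6}"
proof (rule inj_onI, rule ccontr)
  fix d d' assume d: "d \<in> {1..6}" and d': "d' \<in> {1..6}"
    and eq: "tau P (EE P j k) (diag d) = tau P (EE P j k) (diag d')" and ne: "d \<noteq> d'"
  have wf: "well_formed 3 P" using sol by (simp add: solves_MEQ_AD_def)
  have all3: "\<And>m. m \<in> {1..3} \<Longrightarrow> m = i \<or> m = j \<or> m = k"
    using i j k ij ik jk by auto
  define D where "D = (\<lambda>d. tau P (inc P i) (diag d)) ` {1..6}"
  have cD: "card D = 6" unfolding D_def using card_image[OF cut_inj[OF sol i]] by simp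
  have DP: "D \<subseteq> PiE (inc P i) (img P)" unfolding D_def using tau_in diag_in by blast
  have fP: "finite (PiE (inc P i) (img P))" using finite_inc finite_img by (intro finite_PiE) auto
  have cP: "card (PiE (inc P i) (img P)) = 6" using six card_PiE[OF finite_inc, of P i "img P"] by (simp add: cs_def)
  have DeqP: "D = PiE (inc P i) (img P)" using card_subset_eq[OF fP DP] cD cP by simp
  define g where "g = restrict (\<lambda>l. if l \<in> EE P i j then sym_at P (diag d) l else sym_at P (diag d') l) (inc P i)"
  have "g \<in> PiE (inc P i) (img P)" unfolding g_def
  proof (subst restrict_PiE_iff, intro ballI)
    fix l assume "l \<in> inc P i"
    have a: "sym_at P (diag d) l \<in> img P l" unfolding img_def using diag_in[OF d] by (rule imageI)
    have b: "sym_at P (diag d') l \<in> img P l" unfolding img_def using diag_in[OF d'] by (rule imageI)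
    show "(if l \<in> EE P i j then sym_at P (diag d) l else sym_at P (diag d') l) \<in> img P l"
      using a b by simp
  qed
  then have "g \<in> D" using DeqP by simp
  then obtain e where e: "e \<in> {1..6}" and ge: "tau P (inc P i) (diag e) = g" unfolding D_def by (rule imageE) (rule that, assumption, rule sym)
  have ge': "\<And>l. l \<in> inc P i \<Longrightarrow> sym_at P (diag e) l = (if l \<in> EE P i j then sym_at P (diag d) l else sym_at P (diag d') l)"
  proof -
    fix l assume li: "l \<in> inc P i"
    have "tau P (inc P i) (diag e) l = g l" using ge by simp
    then show "sym_at P (diag e) l = (if l \<in> EE P i j then sym_at P (diag d) l else sym_at P (diag d') l)"
      using li by (simp add: tau_def g_def)
  qed
  define Y where "Y = (\<lambda>m::nat. if m = i then diag e else if m = j then diag d else diag d')"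
  define \<sigma> where "\<sigma> = (\<lambda>l. if l \<in> EE P i j then sym_at P (diag d) l else if l \<in> EE P i k then sym_at P (diag d') l else sym_at P (diag d) l)"
  define x where "x = restrict (\<lambda>m::nat. if m = i then e else if m = j then d else d') {1..3}"
  have Yin: "\<forall>m\<in>{1..3}. Y m \<in> inputs 3 6" using diag_in d d' e by (simp add: Y_def)
  have Yc: "\<forall>m\<in>{1..3}. \<forall>a\<in>{1..3}. \<forall>b\<in>{1..3}. Y m a = Y m b" by (simp add: Y_def diag_app)
  have agree: "\<forall>m\<in>{1..3}. \<forall>l<length (steps P). (TT P l = m \<or> RR P l = m) \<longrightarrow> \<sigma> l = sym_at P (Y m) l"
  proof (intro ballI allI impI)
    fix m l assume m: "m \<in> {1..3}" and l: "l < length (steps P)" and lm: "TT P l = m \<or> RR P l = m"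
    have w: "TT P l \<in> {1..3}" "RR P l \<in> {1..3}" "TT P l \<noteq> RR P l" using wf_nth[OF wf l] by auto
    have oT: "TT P l = i \<or> TT P l = j \<or> TT P l = k" using all3[OF w(1)] .
    have oR: "RR P l = i \<or> RR P l = j \<or> RR P l = k" using all3[OF w(2)] .
    consider "m = i" | "m = j" | "m = k" using all3[OF m] by blast
    then show "\<sigma> l = sym_at P (Y m) l"
    proof cases
      case 1
      then have li: "l \<in> inc P i" using l lm by (simp add: inc_def)
      show ?thesis
      proof (cases "l \<in> EE P i j")
        case True then show ?thesis using ge'[OF li] 1 by (simp add: \<sigma>_def Y_def)
      next
        case False
        then have "l \<in> EE P i k" using l lm 1 oT oR w(3) by (auto simp: EE_def)
        then show ?thesis using ge'[OF li] 1 False by (simp add: \<sigma>_def Y_def)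
      qed
    next
      case 2
      show ?thesis
      proof (cases "l \<in> EE P i j")
        case True then show ?thesis using 2 ij by (simp add: \<sigma>_def Y_def)
      next
        case False
        then have "l \<notin> EE P i k" using lm 2 ij jk by (auto simp: EE_def)
        then show ?thesis using 2 False ij by (simp add: \<sigma>_def Y_def)
      qed
    next
      case 3
      show ?thesis
      proof (cases "l \<in> EE P i k")
        case True
        then have "l \<notin> EE P i j" using jk ij by (auto simp: EE_def)
        then show ?thesis using 3 True ik jk by (simp add: \<sigma>_def Y_def)
      next
        case False
        then have nij: "l \<notin> EE P i j" using lm 3 ik jk by (auto simp: EE_def)
        have "l \<in> EE P j k" using l lm 3 oT oR w(3) False nij by (auto simp: EE_def)
        then have "sym_at P (diag d) l = sym_at P (diag d') l" by (rule tau_eqD[OF eq])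
        then show ?thesis using 3 False nij ik jk by (simp add: \<sigma>_def Y_def)
      qed
    qed
  qed
  have xin: "x \<in> inputs 3 6" using d d' e by (simp add: x_def inputs_def restrict_PiE_iff)
  have xY: "\<forall>m\<in>{1..3}. x m = Y m m" by (simp add: x_def Y_def diag_app)
  have c: "\<forall>a\<in>{1..3}. \<forall>b\<in>{1..3}. x a = x b"
    by (rule fool[OF sol Yin Yc agree xin xY])
  have "x j = x k" using c j k by blast
  then show False using j k ij ik jk ne by (simp add: x_def)
qed

lemma finite_EE: "finite (EE P i j)" unfolding EE_def by simp

lemma tight_bound:
  assumes sol: "solves_MEQ_AD 3 6 P" and i: "i \<in> {1..3}" and j: "j \<in> {1..3}" and k: "k \<in> {1..3}"
    and ij: "i \<noteq> j" and ik: "i \<noteq> k" and jk: "j \<noteq> k"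
    and six: "cs P (inc P i) = 6"
  shows "6 \<le> cs P (EE P j k)"
proof -
  have "card ((\<lambda>d. tau P (EE P j k) (diag d)) ` {1..6}) = 6"
    using card_image[OF tight_inj[OF assms]] by simp
  moreover have "card ((\<lambda>d. tau P (EE P j k) (diag d)) ` {1..6}) = card (tau P (EE P j k) ` (diag ` {1..6}))"
    by (simp add: image_image)
  moreover have "card (tau P (EE P j k) ` (diag ` {1..6})) \<le> cs P (EE P j k)"
    using finite_EE diag_in by (intro card_tau_le) auto
  ultimately show ?thesis by simp
qed


lemma EE_sym: "EE P i j = EE P j i" unfolding EE_def by auto

lemma inc_split:
  assumes wf: "well_formed 3 P" and i: "i \<in> {1..3}" and j: "j \<in> {1..3}" and k: "k \<in> {1..3}"
    and ij: "i \<noteq> j" and ik: "i \<noteq> k" and jk: "j \<noteq> k"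
  shows "inc P i = EE P i j \<union> EE P i k" "EE P i j \<inter> EE P i k = {}"
proof -
  have all3: "\<And>m. m \<in> {1..3} \<Longrightarrow> m = i \<or> m = j \<or> m = k"
    using i j k ij ik jk by auto
  show "inc P i = EE P i j \<union> EE P i k"
  proof (intro equalityI subsetI)
    fix l assume "l \<in> inc P i"
    then have l: "l < length (steps P)" "TT P l = i \<or> RR P l = i" by (auto simp: inc_def)
    have w: "TT P l \<in> {1..3}" "RR P l \<in> {1..3}" "TT P l \<noteq> RR P l" using wf_nth[OF wf l(1)] by auto
    show "l \<in> EE P i j \<union> EE P i k" using l w all3[OF w(1)] all3[OF w(2)] by (auto simp: EE_def)
  next
    fix l assume "l \<in> EE P i j \<union> EE P i k"
    then show "l \<in> inc P i" by (auto simp: EE_def inc_def)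
  qed
  show "EE P i j \<inter> EE P i k = {}" using ij ik jk by (auto simp: EE_def)
qed

lemma all_split:
  assumes wf: "well_formed 3 P"
  shows "{..<length (steps P)} = (EE P 1 2 \<union> EE P 1 3) \<union> EE P 2 3"
    "EE P 1 2 \<inter> EE P 1 3 = {}" "(EE P 1 2 \<union> EE P 1 3) \<inter> EE P 2 3 = {}"
proof -
  show "{..<length (steps P)} = (EE P 1 2 \<union> EE P 1 3) \<union> EE P 2 3"
  proof (intro equalityI subsetI)
    fix l assume "l \<in> {..<length (steps P)}"
    then have l: "l < length (steps P)" by simp
    have w: "TT P l \<in> {1..3}" "RR P l \<in> {1..3}" "TT P l \<noteq> RR P l" using wf_nth[OF wf l] by auto
    have a: "TT P l = 1 \<or> TT P l = 2 \<or> TT P l = 3" using w(1) by auto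
    have b: "RR P l = 1 \<or> RR P l = 2 \<or> RR P l = 3" using w(2) by auto
    show "l \<in> (EE P 1 2 \<union> EE P 1 3) \<union> EE P 2 3" using l a b w(3) by (auto simp: EE_def)
  next
    fix l assume "l \<in> (EE P 1 2 \<union> EE P 1 3) \<union> EE P 2 3"
    then show "l \<in> {..<length (steps P)}" by (auto simp: EE_def)
  qed
  show "EE P 1 2 \<inter> EE P 1 3 = {}" by (auto simp: EE_def)
  show "(EE P 1 2 \<union> EE P 1 3) \<inter> EE P 2 3 = {}" by (auto simp: EE_def)
qed

lemma cs_union: "finite A \<Longrightarrow> finite B \<Longrightarrow> A \<inter> B = {} \<Longrightarrow> cs P (A \<union> B) = cs P A * cs P B"
  unfolding cs_def by (rule prod.union_disjoint)

lemma node_facts: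
  assumes sol: "solves_MEQ_AD 3 6 P" and i: "i \<in> {1..3}" and j: "j \<in> {1..3}" and k: "k \<in> {1..3}"
    and ij: "i \<noteq> j" and ik: "i \<noteq> k" and jk: "j \<noteq> k"
  shows "6 \<le> cs P (EE P i j) * cs P (EE P i k)"
    "cs P (EE P i j) * cs P (EE P i k) = 6 \<Longrightarrow> 6 \<le> cs P (EE P j k)"
proof -
  have wf: "well_formed 3 P" using sol by (simp add: solves_MEQ_AD_def)
  have e: "cs P (inc P i) = cs P (EE P i j) * cs P (EE P i k)"
    using inc_split[OF wf i j k ij ik jk] finite_EE by (simp add: cs_union)
  show "6 \<le> cs P (EE P i j) * cs P (EE P i k)" using cut_bound[OF sol i] e by simp
  show "cs P (EE P i j) * cs P (EE P i k) = 6 \<Longrightarrow> 6 \<le> cs P (EE P j k)"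
    using tight_bound[OF sol i j k ij ik jk] e by simp
qed

lemma lower27:
  assumes sol: "solves_MEQ_AD 3 6 P"
  shows "27 \<le> cs P {..<length (steps P)}"
proof -
  have wf: "well_formed 3 P" using sol by (simp add: solves_MEQ_AD_def)
  define p where "p = cs P (EE P 1 2)"
  define q where "q = cs P (EE P 1 3)"
  define r where "r = cs P (EE P 2 3)"
  have tot: "cs P {..<length (steps P)} = p*q*r"
    using all_split[OF wf] finite_EE by (simp add: cs_union p_def q_def r_def)
  have s21: "EE P 2 1 = EE P 1 2" by (rule EE_sym)
  have s31: "EE P 3 1 = EE P 1 3" by (rule EE_sym)
  have s32: "EE P 3 2 = EE P 2 3" by (rule EE_sym)
  have h1: "6 \<le> cs P (EE P 1 2) * cs P (EE P 1 3) \<and> (cs P (EE P 1 2) * cs P (EE P 1 3) = 6 \<longrightarrow> 6 \<le> cs P (EE P 2 3))"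
    using node_facts[OF sol, of 1 2 3] by simp
  have h2: "6 \<le> cs P (EE P 2 1) * cs P (EE P 2 3) \<and> (cs P (EE P 2 1) * cs P (EE P 2 3) = 6 \<longrightarrow> 6 \<le> cs P (EE P 1 3))"
    using node_facts[OF sol, of 2 1 3] by simp
  have h3: "6 \<le> cs P (EE P 3 1) * cs P (EE P 3 2) \<and> (cs P (EE P 3 1) * cs P (EE P 3 2) = 6 \<longrightarrow> 6 \<le> cs P (EE P 1 2))"
    using node_facts[OF sol, of 3 1 2] by simp
  have n1: "6 \<le> p*q" "p*q = 6 \<Longrightarrow> 6 \<le> r" using h1 unfolding p_def q_def r_def by blast+
  have n2: "6 \<le> p*r" "p*r = 6 \<Longrightarrow> 6 \<le> q" using h2 unfolding s21 p_def q_def r_def by blast+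
  have n3: "6 \<le> q*r" "q*r = 6 \<Longrightarrow> 6 \<le> p" using h3 unfolding s31 s32 p_def q_def r_def by blast+
  show ?thesis using arith27[OF n1(1) n2(1) n3(1) n1(2) n2(2) n3(2)] tot by simp
qed

lemma complexity_eq:
  "complexity 3 6 P = log 2 (real (cs P {..<length (steps P)}))"
proof -
  have pos: "\<And>l. 0 < real (card (img P l))" using img_pos by simp
  have "log 2 (real (cs P {..<length (steps P)})) = ln (\<Prod>l<length (steps P). real (card (img P l))) / ln 2"
    by (simp add: cs_def log_def)
  also have "\<dots> = (\<Sum>l<length (steps P). ln (real (card (img P l)))) / ln 2"
    using pos by (subst ln_prod) (auto intro: less_imp_neq[symmetric])
  also have "\<dots> = (\<Sum>l<length (steps P). log 2 (real (card (img P l))))"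
    by (simp add: log_def sum_divide_distrib)
  finally show ?thesis by (simp add: complexity_def img_def)
qed

lemma complexity_lower:
  assumes sol: "solves_MEQ_AD 3 6 P"
  shows "log 2 27 \<le> complexity 3 6 P"
proof -
  have "(27::real) \<le> real (cs P {..<length (steps P)})" using lower27[OF sol] by simp
  then show ?thesis unfolding complexity_eq by (subst log_le_cancel_iff) auto
qed



definition t1 :: "nat list" where "t1 = [2,1,0,0,1,2]"
definition t2 :: "nat list list" where "t2 = [[0,2,0],[0,1,1],[2,1,1],[0,0,0],[2,2,2],[1,2,1]]"
definition t3 :: "nat list list" where "t3 = [[1,1,2],[0,0,1],[2,2,2],[0,0,0],[1,1,1],[2,2,2]]"
definition a1 :: "nat list" where "a1 = [1,0,2,0,1,2]"
definition a3 :: "nat list" where "a3 = [0,1,2,0,2,1]"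

definition P0 :: protocol where
  "P0 = \<lparr> steps = [(1, 2, \<lambda>v r. t1 ! (v - 1)), (2, 3, \<lambda>v r. t2 ! (v - 1) ! hd r), (3, 1, \<lambda>v r. t3 ! (v - 1) ! hd r)],
          eq_out = (\<lambda>i v r. if i = 1 then hd r \<noteq> a1 ! (v - 1) else if i = 2 then hd r \<noteq> t1 ! (v - 1) else hd r \<noteq> a3 ! (v - 1)) \<rparr>"

definition s1 where "s1 x = t1 ! (x (1::nat) - 1)"
definition s2 where "s2 x = t2 ! (x (2::nat) - 1) ! s1 x"
definition s3 where "s3 x = t3 ! (x (3::nat) - 1) ! s2 x"

lemma hist0: "history P0 x = [(2, s1 x), (3, s2 x), (1, s3 x)]"
  by (simp add: history_def P0_def received_def s1_def s2_def s3_def)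

lemma check216: "\<forall>a\<in>{1..6::nat}. \<forall>b\<in>{1..6::nat}. \<forall>c\<in>{1..6::nat}.
   (\<not> (t3 ! (c - 1) ! (t2 ! (b - 1) ! (t1 ! (a - 1))) \<noteq> a1 ! (a - 1)) \<and>
    \<not> (t1 ! (a - 1) \<noteq> t1 ! (b - 1)) \<and>
    \<not> (t2 ! (b - 1) ! (t1 ! (a - 1)) \<noteq> a3 ! (c - 1))) \<longleftrightarrow> (a = b \<and> b = c)"
proof -
  have e: "{1..6::nat} = {1,2,3,4,5,6}" by auto
  show ?thesis unfolding e by (simp add: t1_def t2_def t3_def a1_def a3_def)
qed


lemma inputs_val: "x \<in> inputs 3 6 \<Longrightarrow> m \<in> {1..3} \<Longrightarrow> x m \<in> {1..6}"
  unfolding inputs_def by (auto simp: PiE_iff)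

lemma r1: "a \<in> {1..6::nat} \<Longrightarrow> t1 ! (a - 1) \<in> {0,1,2}"
proof -
  assume "a \<in> {1..6}" then have "a \<in> {1,2,3,4,5,6}" by auto
  then show ?thesis by (auto simp: t1_def)
qed
lemma r2: "a \<in> {1..6::nat} \<Longrightarrow> b \<in> {0,1,2::nat} \<Longrightarrow> t2 ! (a - 1) ! b \<in> {0,1,2}"
proof -
  assume "a \<in> {1..6}" "b \<in> {0,1,2}" then have "a \<in> {1,2,3,4,5,6}" "b \<in> {0,1,2}" by auto
  then show ?thesis by (auto simp: t2_def)
qed
lemma r3: "a \<in> {1..6::nat} \<Longrightarrow> b \<in> {0,1,2::nat} \<Longrightarrow> t3 ! (a - 1) ! b \<in> {0,1,2}"
proof -
  assume "a \<in> {1..6}" "b \<in> {0,1,2}" then have "a \<in> {1,2,3,4,5,6}" "b \<in> {0,1,2}" by auto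
  then show ?thesis by (auto simp: t3_def)
qed

lemma sym0: "sym_at P0 x 0 = s1 x" "sym_at P0 x 1 = s2 x" "sym_at P0 x 2 = s3 x"
  by (simp_all add: sym_at_def hist0)

lemma s_range: "x \<in> inputs 3 6 \<Longrightarrow> s1 x \<in> {0,1,2} \<and> s2 x \<in> {0,1,2} \<and> s3 x \<in> {0,1,2}"
proof -
  assume x: "x \<in> inputs 3 6"
  have v: "x 1 \<in> {1..6}" "x 2 \<in> {1..6}" "x 3 \<in> {1..6}" using inputs_val[OF x] by auto
  have a: "s1 x \<in> {0,1,2}" unfolding s1_def using r1[OF v(1)] .
  have b: "s2 x \<in> {0,1,2}" unfolding s2_def using r2[OF v(2) a] .
  have c: "s3 x \<in> {0,1,2}" unfolding s3_def using r3[OF v(3) b] .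
  show ?thesis using a b c by blast
qed

lemma img0: "l < 3 \<Longrightarrow> img P0 l = {0,1,2}"
proof -
  assume l: "l < 3"
  have d: "diag 1 \<in> inputs 3 6" "diag 2 \<in> inputs 3 6" "diag 3 \<in> inputs 3 6" by (auto intro: diag_in)
  have dv: "\<And>d m. m \<in> {1..3} \<Longrightarrow> diag d m = d" by (rule diag_app)
  have l3: "l = 0 \<or> l = 1 \<or> l = 2" using l by auto
  show ?thesis
  proof (intro equalityI subsetI)
    fix y assume "y \<in> img P0 l"
    then obtain x where x: "x \<in> inputs 3 6" and y: "y = sym_at P0 x l" unfolding img_def by blast
    show "y \<in> {0,1,2}" using s_range[OF x] l3 y sym0 by auto
  next
    fix y :: nat assume y: "y \<in> {0,1,2}"
    have w: "\<And>z. z \<in> inputs 3 6 \<Longrightarrow> sym_at P0 z l \<in> img P0 l" unfolding img_def by blast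
    have vals: "s1 (diag 3) = 0" "s1 (diag 2) = 1" "s1 (diag 1) = 2"
      "s2 (diag 1) = 0" "s2 (diag 2) = 1" "s2 (diag 3) = 2"
      "s3 (diag 2) = 0" "s3 (diag 1) = 1" "s3 (diag 3) = 2"
      by (simp_all add: s1_def s2_def s3_def dv t1_def t2_def t3_def)
    show "y \<in> img P0 l" using l3 y w[OF d(1)] w[OF d(2)] w[OF d(3)] vals sym0 by auto
  qed
qed

lemma P0_len: "length (steps P0) = 3" by (simp add: P0_def)

lemma P0_complexity: "complexity 3 6 P0 = log 2 27"
proof -
  have "cs P0 {..<3} = 27" unfolding cs_def using img0 by (simp add: lessThan_nat_numeral)
  then show ?thesis unfolding complexity_eq P0_len by simp
qed

lemma P0_solves: "solves_MEQ_AD 3 6 P0"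
  unfolding solves_MEQ_AD_def
proof (intro conjI ballI)
  show "well_formed 3 P0" by (simp add: well_formed_def P0_def)
next
  fix x assume x: "x \<in> inputs 3 6"
  have v: "x 1 \<in> {1..6}" "x 2 \<in> {1..6}" "x 3 \<in> {1..6}" using inputs_val[OF x] by auto
  have e3: "{1..3::nat} = {1,2,3}" by auto
  have rc: "received 1 (history P0 x) = [s3 x]" "received 2 (history P0 x) = [s1 x]" "received 3 (history P0 x) = [s2 x]"
    by (simp_all add: hist0 received_def)
  have c: "(\<not> (t3 ! (x 3 - 1) ! (t2 ! (x 2 - 1) ! (t1 ! (x 1 - 1))) \<noteq> a1 ! (x 1 - 1)) \<and>
    \<not> (t1 ! (x 1 - 1) \<noteq> t1 ! (x 2 - 1)) \<and>
    \<not> (t2 ! (x 2 - 1) ! (t1 ! (x 1 - 1)) \<noteq> a3 ! (x 3 - 1))) \<longleftrightarrow> (x 1 = x 2 \<and> x 2 = x 3)"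
    using check216 v by blast
  show "(\<forall>i\<in>{1..3}. \<not> eq_out P0 i (x i) (received i (history P0 x))) \<longleftrightarrow> (\<forall>i\<in>{1..3}. \<forall>j\<in>{1..3}. x i = x j)"
  proof -
    have eqo: "eq_out P0 = (\<lambda>i v r. if i = 1 then hd r \<noteq> a1 ! (v - 1) else if i = 2 then hd r \<noteq> t1 ! (v - 1) else hd r \<noteq> a3 ! (v - 1))"
      by (simp add: P0_def)
    have o1: "eq_out P0 1 (x 1) (received 1 (history P0 x)) = (s3 x \<noteq> a1 ! (x 1 - 1))" by (simp only: eqo rc) simp
    have o2: "eq_out P0 2 (x 2) (received 2 (history P0 x)) = (s1 x \<noteq> t1 ! (x 2 - 1))" by (simp only: eqo rc) simp
    have o3: "eq_out P0 3 (x 3) (received 3 (history P0 x)) = (s2 x \<noteq> a3 ! (x 3 - 1))" by (simp only: eqo rc) simp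
    have c': "(\<not> (s3 x \<noteq> a1 ! (x 1 - 1)) \<and> \<not> (s1 x \<noteq> t1 ! (x 2 - 1)) \<and> \<not> (s2 x \<noteq> a3 ! (x 3 - 1)))
        \<longleftrightarrow> (x 1 = x 2 \<and> x 2 = x 3)" using c by (simp only: s1_def s2_def s3_def)
    have b3: "\<And>Q. (\<forall>i\<in>{1,2,3::nat}. Q i) \<longleftrightarrow> Q 1 \<and> Q 2 \<and> Q 3" by simp
    have rhs: "(\<forall>i\<in>{1,2,3::nat}. \<forall>j\<in>{1,2,3::nat}. x i = x j) \<longleftrightarrow> (x 1 = x 2 \<and> x 2 = x 3)" by auto
    show ?thesis unfolding e3 b3[of "\<lambda>i. \<not> eq_out P0 i (x i) (received i (history P0 x))"] rhs o1 o2 o3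
      by (rule c')
  qed
qed

theorem mainTheorem8:
  shows "C_AD 3 6 = log 2 27"
  unfolding C_AD_def
proof (rule cInf_eq_minimum)
  show "log 2 27 \<in> complexity 3 6 ` {P. solves_MEQ_AD 3 6 P}"
    using P0_solves P0_complexity by (metis (mono_tags) image_eqI mem_Collect_eq)
next
  fix y assume "y \<in> complexity 3 6 ` {P. solves_MEQ_AD 3 6 P}"
  then show "log 2 27 \<le> y" using complexity_lower by blast
qed

end
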